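(* Let $S$ be a numerical semigroup with minimal generators $e<a_1<\dots<a_t$. Then ${\rm d}_{\max}(S)=\max_{0\le i<e,\ u\in{\rm adj}(S_i)}|\mathcal R(u)|$.
   Context: A numerical semigroup is a submonoid of $(\mathbb N,+)$ with finite complement in $\mathbb N$, with minimal generators $e<a_1<\dots<a_t$. An $S$-factorization of $n\in S$ is a tuple $(c_0,\dots,c_t)\in\mathbb N^{t+1}$ with $c_0e+\sum c_ia_i=n$; its length is $\sum c_i$. ${\rm ord}(n;S)$ is the maximum length of an $S$-factorization of $n$, and ${\rm d}_{\max}(n;S)$ is the number of $S$-factorizations of $n$ of length ${\rm ord}(n;S)$. We set ${\rm d}_{\max}(S)=\max_{n\in S}{\rm d}_{\max}(n;S)$. Let $d_i=a_i-e$, $B=\langle e,d_1,\dots,d_t\rangle$ (the blowup) and $\mathcal D=(e,d_1,\dots,d_t)$. A $B^{\mathcal D}$-factorization of $b\in B$ is a tuple $(x_0,\dots,x_t)\in\mathbb N^{t+1}$ with $x_0e+\sum x_id_i=b$, with length $\sum x_i$. $\min{\rm ord}(b;B^{\mathcal D})$ is the minimum length of such a factorization, and $\mathcal P(b)$ is the set of all of them. For $s\in S$ put ${\rm adj}(s)=s-{\rm ord}(s;S)e$, and $S_i=\{s\in S:s\equiv i\pmod e\}$. For fixed $i$ write ${\rm adj}(S_i)=\{{\rm adj}(s):s\in S_i\}=\{u_0<u_1<\cdots\}$. Define $\mathcal R(u_0)=\mathcal P(u_0)$ and, for $j>0$, $\mathcal R(u_j)=\{\mathbf x\in\mathcal P(u_j):|\mathbf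 x|<\min{\rm ord}(u_{j-1};B^{\mathcal D})-\frac{u_j-u_{j-1}}{e}\}$. *)

theory Defs
  imports Main "HOL-Library.Extended_Nat"
begin

text \<open>Generators are given as g 0 = e < g 1 = a_1 < ... < g t = a_t.
 Tuples in N^(t+1) are functions nat => nat vanishing above t.\<close>

definition numerical_semigroup :: "nat set \<Rightarrow> bool" where
  "numerical_semigroup S \<longleftrightarrow> 0 \<in> S \<and> (\<forall>x\<in>S. \<forall>y\<in>S. x + y \<in> S) \<and> finite (UNIV - S)"

definition tuples :: "nat \<Rightarrow> (nat \<Rightarrow> nat) set" where
  "tuples t = {c. \<forall>i>t. c i = 0}"

definition tlen :: "nat \<Rightarrow> (nat \<Rightarrow> nat) \<Rightarrow> nat" where
  "tlen t c = (\<Sum>i\<le>t. c i)"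

definition minimal_generators :: "nat set \<Rightarrow> (nat \<Rightarrow> nat) \<Rightarrow> nat \<Rightarrow> bool" where
  "minimal_generators S g t \<longleftrightarrow>
     strict_mono_on {..t} g \<and>
     S = {n. \<exists>c. n = (\<Sum>i\<le>t. c i * g i)} \<and>
     (\<forall>j\<le>t. g j \<notin> {n. \<exists>c. n = (\<Sum>i\<in>{..t} - {j}. c i * g i)})"

definition sfact :: "(nat \<Rightarrow> nat) \<Rightarrow> nat \<Rightarrow> nat \<Rightarrow> (nat \<Rightarrow> nat) set" where
  "sfact g t n = {c \<in> tuples t. (\<Sum>i\<le>t. c i * g i) = n}"

definition ord :: "(nat \<Rightarrow> nat) \<Rightarrow> nat \<Rightarrow> nat \<Rightarrow> nat" where
  "ord g t n = Max (tlen t ` sfact g t n)"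

definition dmax :: "(nat \<Rightarrow> nat) \<Rightarrow> nat \<Rightarrow> nat \<Rightarrow> nat" where
  "dmax g t n = card {c \<in> sfact g t n. tlen t c = ord g t n}"

definition dmaxS :: "nat set \<Rightarrow> (nat \<Rightarrow> nat) \<Rightarrow> nat \<Rightarrow> nat" where
  "dmaxS S g t = Max (dmax g t ` S)"

definition blowD :: "(nat \<Rightarrow> nat) \<Rightarrow> nat \<Rightarrow> nat" where
  "blowD g i = (if i = 0 then g 0 else g i - g 0)"

definition Pset :: "(nat \<Rightarrow> nat) \<Rightarrow> nat \<Rightarrow> nat \<Rightarrow> (nat \<Rightarrow> nat) set" where
  "Pset g t b = {x \<in> tuples t. (\<Sum>i\<le>t. x i * blowD g i) = b}"

definition minord :: "(nat \<Rightarrow> nat) \<Rightarrow> nat \<Rightarrow> nat \<Rightarrow> nat" where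
  "minord g t b = Min (tlen t ` Pset g t b)"

definition adj :: "(nat \<Rightarrow> nat) \<Rightarrow> nat \<Rightarrow> nat \<Rightarrow> nat" where
  "adj g t s = s - ord g t s * g 0"

definition Sres :: "nat set \<Rightarrow> (nat \<Rightarrow> nat) \<Rightarrow> nat \<Rightarrow> nat set" where
  "Sres S g i = {s \<in> S. s mod g 0 = i}"

definition Rset :: "nat set \<Rightarrow> (nat \<Rightarrow> nat) \<Rightarrow> nat \<Rightarrow> nat \<Rightarrow> nat \<Rightarrow> (nat \<Rightarrow> nat) set" where
  "Rset S g t i u =
     (let A = adj g t ` Sres S g i in
      if u = Min A then Pset g t u
      else (let v = Max {w \<in> A. w < u} in
        {x \<in> Pset g t u. real (tlen t x) < real (minord g t v) - (real u - real v) / real (g 0)}))"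

end

theory Submission
  imports Defs "HOL-Library.FuncSet"
begin

definition W :: "(nat \<Rightarrow> nat) \<Rightarrow> nat \<Rightarrow> (nat \<Rightarrow> nat) \<Rightarrow> nat" where
  "W g t c = (\<Sum>i\<in>{1..t}. c i * blowD g i)"

definition tl1 :: "nat \<Rightarrow> (nat \<Rightarrow> nat) \<Rightarrow> nat" where
  "tl1 t c = (\<Sum>i\<in>{1..t}. c i)"

lemma atMost_split: "{..t::nat} = insert 0 {1..t}" by auto

lemma tlen_split: "tlen t c = c 0 + tl1 t c"
  unfolding tlen_def tl1_def by (simp add: atMost_split)

lemma W_upd0[simp]: "W g t (c(0:=a)) = W g t c"
  unfolding W_def by (rule sum.cong) auto

lemma tl1_upd0[simp]: "tl1 t (c(0:=a)) = tl1 t c"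
  unfolding tl1_def by (rule sum.cong) auto

lemma tuples_upd0[simp]: "c \<in> tuples t \<Longrightarrow> c(0:=a) \<in> tuples t"
  unfolding tuples_def by auto

lemma finite_bounded_tuples:
  "finite {c::nat\<Rightarrow>nat. \<forall>i. (i \<le> t \<longrightarrow> c i \<le> n) \<and> (t < i \<longrightarrow> c i = 0)}"
proof -
  let ?h = "\<lambda>(f::nat\<Rightarrow>nat) i. if i \<le> t then f i else 0"
  have "{c::nat\<Rightarrow>nat. \<forall>i. (i \<le> t \<longrightarrow> c i \<le> n) \<and> (t < i \<longrightarrow> c i = 0)}
        \<subseteq> ?h ` (PiE {..t} (\<lambda>_. {..n}))"
  proof
    fix c :: "nat \<Rightarrow> nat" assume c: "c \<in> {c. \<forall>i. (i \<le> t \<longrightarrow> c i \<le> n) \<and> (t < i \<longrightarrow> c i = 0)}"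
    have "c = ?h (restrict c {..t})" using c by (auto simp: fun_eq_iff)
    moreover have "restrict c {..t} \<in> PiE {..t} (\<lambda>_. {..n})" using c by auto
    ultimately show "c \<in> ?h ` (PiE {..t} (\<lambda>_. {..n}))" by blast
  qed
  moreover have "finite (PiE {..t} (\<lambda>_. {..n::nat}))" by (rule finite_PiE) auto
  ultimately show ?thesis using finite_subset by blast
qed

context
  fixes S :: "nat set" and g :: "nat \<Rightarrow> nat" and t :: nat
  assumes gpos: "0 < g 0"
    and gmono: "\<And>i. 1 \<le> i \<Longrightarrow> i \<le> t \<Longrightarrow> g 0 < g i"
    and Sdef: "S = {n. \<exists>c. n = (\<Sum>i\<le>t. c i * g i)}"
begin

lemma blowD_pos: "i \<le> t \<Longrightarrow> 1 \<le> blowD g i"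
  using gpos gmono[of i] by (cases "i = 0") (auto simp: blowD_def)

lemma g_pos: "i \<le> t \<Longrightarrow> 1 \<le> g i"
  using gpos gmono[of i] by (cases "i = 0") auto

lemma sum_g: "(\<Sum>i\<le>t. c i * g i) = tlen t c * g 0 + W g t c"
proof -
  have "(\<Sum>i\<in>{1..t}. c i * g i) = (\<Sum>i\<in>{1..t}. c i * blowD g i + c i * g 0)"
  proof (rule sum.cong)
    fix i assume "i \<in> {1..t}"
    then have "g i = blowD g i + g 0" using gmono[of i] by (auto simp: blowD_def)
    then show "c i * g i = c i * blowD g i + c i * g 0" by (simp add: algebra_simps)
  qed simp
  also have "\<dots> = W g t c + tl1 t c * g 0"
    by (simp add: sum.distrib W_def tl1_def sum_distrib_right)
  finally show ?thesis by (simp add: atMost_split tlen_split algebra_simps)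
qed

lemma sum_b: "(\<Sum>i\<le>t. x i * blowD g i) = x 0 * g 0 + W g t x"
  by (simp add: atMost_split W_def blowD_def)

lemma sfact_fin: "finite (sfact g t n)"
proof (rule finite_subset[OF _ finite_bounded_tuples[of t n]])
  show "sfact g t n \<subseteq> {c. \<forall>i. (i \<le> t \<longrightarrow> c i \<le> n) \<and> (t < i \<longrightarrow> c i = 0)}"
  proof (safe)
    fix c i assume c: "c \<in> sfact g t n" and i: "i \<le> t"
    have "c i \<le> c i * g i" using g_pos[OF i] by simp
    also have "\<dots> \<le> (\<Sum>i\<le>t. c i * g i)" by (rule member_le_sum) (use i in auto)
    finally show "c i \<le> n" using c by (simp add: sfact_def)
  next
    fix c i assume "c \<in> sfact g t n" "t < i" then show "c i = 0" by (simp add: sfact_def tuples_def)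
  qed
qed

lemma Pset_fin: "finite (Pset g t n)"
proof (rule finite_subset[OF _ finite_bounded_tuples[of t n]])
  show "Pset g t n \<subseteq> {c. \<forall>i. (i \<le> t \<longrightarrow> c i \<le> n) \<and> (t < i \<longrightarrow> c i = 0)}"
  proof (safe)
    fix c i assume c: "c \<in> Pset g t n" and i: "i \<le> t"
    have "c i \<le> c i * blowD g i" using blowD_pos[OF i] by simp
    also have "\<dots> \<le> (\<Sum>i\<le>t. c i * blowD g i)" by (rule member_le_sum) (use i in auto)
    finally show "c i \<le> n" using c by (simp add: Pset_def)
  next
    fix c i assume "c \<in> Pset g t n" "t < i" then show "c i = 0" by (simp add: Pset_def tuples_def)
  qed
qed

lemma tlen_le_Pset: "x \<in> Pset g t n \<Longrightarrow> tlen t x \<le> n"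
proof -
  assume x: "x \<in> Pset g t n"
  have "tlen t x = (\<Sum>i\<le>t. x i)" by (simp add: tlen_def)
  also have "\<dots> \<le> (\<Sum>i\<le>t. x i * blowD g i)" by (rule sum_mono) (use blowD_pos in simp)
  finally show ?thesis using x by (simp add: Pset_def)
qed

lemma S_iff: "n \<in> S \<longleftrightarrow> sfact g t n \<noteq> {}"
proof
  assume "n \<in> S"
  then obtain c where c: "n = (\<Sum>i\<le>t. c i * g i)" using Sdef by auto
  let ?c = "\<lambda>i. if i \<le> t then c i else 0"
  have "?c \<in> sfact g t n" using c by (simp add: sfact_def tuples_def)
  then show "sfact g t n \<noteq> {}" by blast
next
  assume "sfact g t n \<noteq> {}"
  then show "n \<in> S" using Sdef by (auto simp: sfact_def)
qed

lemma ord_le: "c \<in> sfact g t n \<Longrightarrow> tlen t c \<le> ord g t n"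
  unfolding ord_def by (rule Max_ge) (use sfact_fin in auto)

lemma ord_ex: "n \<in> S \<Longrightarrow> \<exists>c\<in>sfact g t n. tlen t c = ord g t n"
  unfolding ord_def using Max_in[of "tlen t ` sfact g t n"] sfact_fin S_iff by fastforce

lemma minord_le: "x \<in> Pset g t b \<Longrightarrow> minord g t b \<le> tlen t x"
  unfolding minord_def by (rule Min_le) (use Pset_fin in auto)

lemma minord_ex: "Pset g t b \<noteq> {} \<Longrightarrow> \<exists>x\<in>Pset g t b. tlen t x = minord g t b"
  unfolding minord_def using Min_in[of "tlen t ` Pset g t b"] Pset_fin by fastforce

lemma G: assumes "x \<in> tuples t" "tl1 t x \<le> M"
  shows "x(0 := M - tl1 t x) \<in> sfact g t (M * g 0 + W g t x) \<and> tlen t (x(0 := M - tl1 t x)) = M"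
proof -
  have l: "tlen t (x(0 := M - tl1 t x)) = M" using assms(2) by (simp add: tlen_split)
  then show ?thesis using assms(1) by (simp add: sfact_def sum_g)
qed

lemma maxfact: "c \<in> sfact g t n \<Longrightarrow> tlen t c = ord g t n \<Longrightarrow> n = ord g t n * g 0 + W g t c"
  by (simp add: sfact_def sum_g)

lemma adj_decomp: assumes "n \<in> S" shows "n = adj g t n + ord g t n * g 0"
proof -
  obtain c where "c \<in> sfact g t n" "tlen t c = ord g t n" using ord_ex[OF assms] by blast
  then have "n = ord g t n * g 0 + W g t c" by (rule maxfact)
  then show ?thesis by (simp add: adj_def)
qed

lemma adj_mod: "n \<in> S \<Longrightarrow> adj g t n mod g 0 = n mod g 0"
  by (metis adj_decomp mod_mult_self1)

lemma chain1: assumes "s \<in> S"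
  shows "s + g 0 \<in> S \<and> ord g t s + 1 \<le> ord g t (s + g 0) \<and> adj g t (s + g 0) \<le> adj g t s"
proof -
  obtain c where c: "c \<in> sfact g t s" "tlen t c = ord g t s" using ord_ex[OF assms] by blast
  have s: "s = ord g t s * g 0 + W g t c" using maxfact[OF c] .
  have "tl1 t c \<le> ord g t s + 1" using c(2) by (simp add: tlen_split)
  from G[OF _ this] c(1) have
    f0: "c(0 := ord g t s + 1 - tl1 t c) \<in> sfact g t ((ord g t s + 1) * g 0 + W g t c)"
    and l: "tlen t (c(0 := ord g t s + 1 - tl1 t c)) = ord g t s + 1"
    by (auto simp: sfact_def)
  have eq: "(ord g t s + 1) * g 0 + W g t c = s + g 0" using s by simp
  have f: "c(0 := ord g t s + 1 - tl1 t c) \<in> sfact g t (s + g 0)" using f0 unfolding eq .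
  have sS: "s + g 0 \<in> S" using f S_iff by blast
  have o: "ord g t s + 1 \<le> ord g t (s + g 0)" using ord_le[OF f] l by simp
  have d: "s + g 0 = adj g t (s + g 0) + ord g t (s + g 0) * g 0" using adj_decomp[OF sS] .
  have d2: "s = adj g t s + ord g t s * g 0" using adj_decomp[OF assms] .
  have "(ord g t s + 1) * g 0 \<le> ord g t (s + g 0) * g 0" using o by (rule mult_right_mono) simp
  then have "adj g t (s + g 0) \<le> adj g t s" using d d2 by (simp add: algebra_simps)
  with sS o show ?thesis by simp
qed

lemma chain: assumes "s \<in> S"
  shows "s + k * g 0 \<in> S \<and> ord g t s + k \<le> ord g t (s + k * g 0) \<and> adj g t (s + k * g 0) \<le> adj g t s"
proof (induction k)
  case 0 then show ?case using assms by simp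
next
  case (Suc k)
  then have "s + k * g 0 \<in> S" by simp
  from chain1[OF this] Suc show ?case by (simp add: algebra_simps)
qed


lemma same_res: assumes "(s::nat) \<le> s'" "s mod g 0 = s' mod g 0" shows "\<exists>k. s' = s + k * g 0"
proof -
  have "g 0 dvd s' - s" using mod_eq_dvd_iff_nat[OF assms(1), of "g 0"] assms(2) by simp
  then obtain k where "s' - s = g 0 * k" by (auto elim: dvdE)
  then show ?thesis using assms(1) by (intro exI[of _ k]) (simp add: algebra_simps)
qed

lemma adj_mono_res: assumes "s \<in> S" "s \<le> s'" "s mod g 0 = s' mod g 0"
  shows "s' \<in> S \<and> adj g t s' \<le> adj g t s"
  using same_res[OF assms(2,3)] chain[OF assms(1)] by blast

lemma A_fin: "finite (adj g t ` Sres S g i)"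
proof (cases "Sres S g i = {}")
  case True then show ?thesis by simp
next
  case False
  define m where "m = (LEAST s. s \<in> Sres S g i)"
  have m: "m \<in> Sres S g i" using False unfolding m_def by (metis LeastI ex_in_conv)
  have "adj g t ` Sres S g i \<subseteq> {..adj g t m}"
  proof
    fix a assume "a \<in> adj g t ` Sres S g i"
    then obtain s where s: "s \<in> Sres S g i" "a = adj g t s" by blast
    have "m \<le> s" using s(1) unfolding m_def by (rule Least_le)
    then have "adj g t s \<le> adj g t m" using adj_mono_res[of m s] m s(1) by (auto simp: Sres_def)
    then show "a \<in> {..adj g t m}" using s by simp
  qed
  then show ?thesis using finite_subset by blast
qed

lemma Rset_sub: "Rset S g t i u \<subseteq> Pset g t u"
  unfolding Rset_def Let_def by auto

lemma K1: assumes sS: "s \<in> S"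
  shows "dmax g t s \<le> card (Rset S g t (s mod g 0) (adj g t s))"
proof -
  define M where "M = {c \<in> sfact g t s. tlen t c = ord g t s}"
  define L where "L = ord g t s"
  define u where "u = adj g t s"
  define i where "i = s mod g 0"
  define A where "A = adj g t ` Sres S g i"
  have inj: "inj_on (\<lambda>c. c(0:=0)) M"
  proof (rule inj_onI)
    fix c c' assume c: "c \<in> M" "c' \<in> M" and eq: "c(0:=0) = c'(0:=0)"
    have "tl1 t c = tl1 t c'" using arg_cong[OF eq, of "tl1 t"] by simp
    then have "c 0 = c' 0" using c by (simp add: M_def tlen_split)
    then show "c = c'" using eq by (metis fun_upd_triv fun_upd_upd)
  qed
  have img: "(\<lambda>c. c(0:=0)) ` M \<subseteq> Rset S g t i u"
  proof
    fix x assume "x \<in> (\<lambda>c. c(0:=0)) ` M"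
    then obtain c where c: "c \<in> M" and x: "x = c(0:=0)" by blast
    have cs: "c \<in> sfact g t s" "tlen t c = L" using c by (auto simp: M_def L_def)
    have uW: "u = W g t c" using maxfact[OF cs(1)] cs(2) by (simp add: u_def adj_def L_def)
    have xP: "x \<in> Pset g t u" using cs(1) x uW by (simp add: Pset_def sfact_def sum_b)
    have xl: "tlen t x \<le> L" using cs(2) x by (simp add: tlen_split)
    show "x \<in> Rset S g t i u"
    proof (cases "u = Min A")
      case True then show ?thesis using xP by (simp add: Rset_def A_def)
    next
      case False
      define v where "v = Max {w \<in> A. w < u}"
      have uA: "u \<in> A" using sS by (auto simp: A_def u_def i_def Sres_def)
      have Af: "finite A" unfolding A_def by (rule A_fin)
      have "Min A < u" using False Min_le[OF Af uA] by simp
      then have ne: "{w \<in> A. w < u} \<noteq> {}" using Min_in[OF Af] uA by blast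
      have "v \<in> {w \<in> A. w < u}" unfolding v_def by (rule Max_in) (use Af ne in auto)
      then have vA: "v \<in> A" and vu: "v < u" by auto
      then obtain s' where s': "s' \<in> S" "s' mod g 0 = i" "v = adj g t s'"
        by (auto simp: A_def Sres_def)
      have "v mod g 0 = u mod g 0" using adj_mod[OF s'(1)] adj_mod[OF sS] s' by (simp add: u_def i_def)
      then obtain \<delta> where \<delta>: "u = v + \<delta> * g 0" using same_res[of v u] vu by auto
      have \<delta>1: "1 \<le> \<delta>" using \<delta> vu by (cases \<delta>) auto
      have rd: "(real u - real v) / real (g 0) = real \<delta>" using \<delta> gpos by (simp add: field_simps)
      have PvP: "Pset g t v \<noteq> {}"
      proof -
        obtain c' where c': "c' \<in> sfact g t s'" "tlen t c' = ord g t s'" using ord_ex[OF s'(1)] by blast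
        have "c'(0:=0) \<in> Pset g t v" using maxfact[OF c'] c' s'(3)
          by (simp add: Pset_def sfact_def sum_b adj_def)
        then show ?thesis by blast
      qed
      have key: "tlen t x + \<delta> < minord g t v"
      proof (rule ccontr)
        assume "\<not> ?thesis"
        then have mle: "minord g t v \<le> L + \<delta>" using xl by simp
        obtain y where y: "y \<in> Pset g t v" "tlen t y = minord g t v" using minord_ex[OF PvP] by blast
        have vy: "v = y 0 * g 0 + W g t y" using y(1) by (simp add: Pset_def sum_b)
        have yt: "y \<in> tuples t" using y(1) by (simp add: Pset_def)
        have "tl1 t y \<le> y 0 + \<delta> + L" using y(2) mle by (simp add: tlen_split)
        from G[OF yt this] have f: "y(0 := y 0 + \<delta> + L - tl1 t y) \<in> sfact g t ((y 0 + \<delta> + L) * g 0 + W g t y)"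
          and fl: "tlen t (y(0 := y 0 + \<delta> + L - tl1 t y)) = y 0 + \<delta> + L" by auto
        have "s = u + L * g 0" using adj_decomp[OF sS] by (simp add: u_def L_def)
        then have "(y 0 + \<delta> + L) * g 0 + W g t y = s" using \<delta> vy by (simp add: algebra_simps)
        with f have "y(0 := y 0 + \<delta> + L - tl1 t y) \<in> sfact g t s" by simp
        from ord_le[OF this] fl \<delta>1 show False by (simp add: L_def)
      qed
      have "real (tlen t x) < real (minord g t v) - (real u - real v) / real (g 0)"
        using key rd by simp
      then show ?thesis using xP False by (simp add: Rset_def A_def v_def Let_def)
    qed
  qed
  have fin: "finite (Rset S g t i u)" using finite_subset[OF Rset_sub Pset_fin] .
  have "card M \<le> card (Rset S g t i u)" by (rule card_inj_on_le[OF inj img fin])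
  then show ?thesis by (simp add: dmax_def M_def i_def u_def)
qed

lemma K3: assumes nS: "n \<in> S" and X: "X \<subseteq> Pset g t (adj g t n)"
    and Xl: "\<And>x. x \<in> X \<Longrightarrow> tlen t x \<le> ord g t n"
  shows "card X \<le> dmax g t n"
proof -
  define L where "L = ord g t n"
  define M where "M = {c \<in> sfact g t n. tlen t c = L}"
  have nd: "n = L * g 0 + adj g t n" using adj_decomp[OF nS] by (simp add: L_def)
  have x0: "x 0 = 0" if x: "x \<in> X" for x
  proof -
    have xP: "x \<in> Pset g t (adj g t n)" using x X by auto
    have xt: "x \<in> tuples t" using xP by (simp add: Pset_def)
    have ad: "adj g t n = x 0 * g 0 + W g t x" using xP by (simp add: Pset_def sum_b)
    have "tl1 t x \<le> L + x 0" using Xl[OF x] by (simp add: tlen_split L_def)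
    from G[OF xt this] have f: "x(0 := L + x 0 - tl1 t x) \<in> sfact g t ((L + x 0) * g 0 + W g t x)"
      and fl: "tlen t (x(0 := L + x 0 - tl1 t x)) = L + x 0" by auto
    have "(L + x 0) * g 0 + W g t x = n" using nd ad by (simp add: algebra_simps)
    with f have "x(0 := L + x 0 - tl1 t x) \<in> sfact g t n" by simp
    from ord_le[OF this] fl show ?thesis by (simp add: L_def)
  qed
  let ?f = "\<lambda>x. x(0 := L - tl1 t x)"
  have inj: "inj_on ?f X"
  proof (rule inj_onI)
    fix x x' assume x: "x \<in> X" "x' \<in> X" and eq: "?f x = ?f x'"
    show "x = x'"
    proof
      fix i show "x i = x' i"
        using x0[OF x(1)] x0[OF x(2)] fun_cong[OF eq, of i] by (cases "i = 0") auto
    qed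
  qed
  have img: "?f ` X \<subseteq> M"
  proof
    fix c assume "c \<in> ?f ` X"
    then obtain x where x: "x \<in> X" and c: "c = ?f x" by blast
    have xP: "x \<in> Pset g t (adj g t n)" using x X by auto
    have xt: "x \<in> tuples t" using xP by (simp add: Pset_def)
    have ad: "adj g t n = W g t x" using xP x0[OF x] by (simp add: Pset_def sum_b)
    have "tl1 t x \<le> L" using Xl[OF x] x0[OF x] by (simp add: tlen_split L_def)
    from G[OF xt this] have "?f x \<in> sfact g t (L * g 0 + W g t x)" "tlen t (?f x) = L" by auto
    then show "c \<in> M" using c nd ad by (simp add: M_def)
  qed
  have fin: "finite M" unfolding M_def using sfact_fin by simp
  have "card X \<le> card M" by (rule card_inj_on_le[OF inj img fin])
  then show ?thesis by (simp add: dmax_def M_def L_def)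
qed

lemma K2: assumes u: "u \<in> adj g t ` Sres S g i"
  shows "\<exists>n\<in>S. card (Rset S g t i u) \<le> dmax g t n"
proof -
  define A where "A = adj g t ` Sres S g i"
  have Af: "finite A" unfolding A_def by (rule A_fin)
  have uA: "u \<in> A" using u by (simp add: A_def)
  show ?thesis
  proof (cases "u = Min A")
    case True
    have R: "Rset S g t i u = Pset g t u" using True by (simp add: Rset_def A_def)
    obtain s0 where s0: "s0 \<in> S" "s0 mod g 0 = i" "u = adj g t s0" using u by (auto simp: Sres_def)
    define n where "n = s0 + u * g 0"
    have ch: "n \<in> S" "ord g t s0 + u \<le> ord g t n" "adj g t n \<le> u"
      using chain[OF s0(1), of u] s0(3) by (auto simp: n_def)
    have "n mod g 0 = i" using s0(2) by (simp add: n_def)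
    then have "adj g t n \<in> A" using ch(1) by (auto simp: A_def Sres_def)
    then have "u \<le> adj g t n" using True Min_le[OF Af] by simp
    then have an: "adj g t n = u" using ch(3) by simp
    have "card (Pset g t u) \<le> dmax g t n"
    proof (rule K3[OF ch(1)])
      show "Pset g t u \<subseteq> Pset g t (adj g t n)" using an by simp
      fix x assume "x \<in> Pset g t u"
      then have "tlen t x \<le> u" by (rule tlen_le_Pset)
      then show "tlen t x \<le> ord g t n" using ch(2) by simp
    qed
    then show ?thesis using R ch(1) by auto
  next
    case False
    define v where "v = Max {w \<in> A. w < u}"
    have "Min A < u" using False Min_le[OF Af uA] by simp
    then have ne: "{w \<in> A. w < u} \<noteq> {}" using Min_in[OF Af] uA by blast
    have "v \<in> {w \<in> A. w < u}" unfolding v_def by (rule Max_in) (use Af ne in auto)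
    then have vA: "v \<in> A" and vu: "v < u" by auto
    then obtain s' where s': "s' \<in> S" "s' mod g 0 = i" "v = adj g t s'"
      by (auto simp: A_def Sres_def)
    define B where "B = {s \<in> Sres S g i. adj g t s = u}"
    have Bb: "s < s'" if s: "s \<in> B" for s
    proof (rule ccontr)
      assume "\<not> s < s'"
      then have "adj g t s \<le> adj g t s'" using adj_mono_res[of s' s] s' s by (auto simp: B_def Sres_def)
      then show False using s s' vu by (simp add: B_def)
    qed
    have Bf: "finite B" using Bb by (meson finite_nat_set_iff_bounded)
    have Bne: "B \<noteq> {}" using u by (auto simp: B_def)
    define n where "n = Max B"
    have nB: "n \<in> B" unfolding n_def using Max_in[OF Bf Bne] .
    have nS: "n \<in> S" and nmod: "n mod g 0 = i" and nu: "adj g t n = u" using nB by (auto simp: B_def Sres_def)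
    have ch: "n + g 0 \<in> S" "ord g t n + 1 \<le> ord g t (n + g 0)" "adj g t (n + g 0) \<le> adj g t n"
      using chain1[OF nS] by auto
    have n1mod: "(n + g 0) mod g 0 = i" using nmod by simp
    have "n + g 0 \<notin> B" using Max_ge[OF Bf, of "n + g 0"] gpos by (auto simp: n_def)
    then have a1u: "adj g t (n + g 0) < u" using ch nu n1mod by (auto simp: B_def Sres_def)
    have a1A: "adj g t (n + g 0) \<in> A" using ch(1) n1mod by (auto simp: A_def Sres_def)
    have "adj g t (n + g 0) \<le> v" unfolding v_def by (rule Max_ge) (use Af a1A a1u in auto)
    moreover have "v \<le> adj g t (n + g 0)"
    proof -
      have "n < s'" using Bb[OF nB] .
      obtain k where "s' = n + k * g 0" using same_res[of n s'] \<open>n < s'\<close> nmod s' by auto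
      with \<open>n < s'\<close> have "k \<ge> 1" by (cases k) auto
      then have "s' = (n + g 0) + (k - 1) * g 0" using \<open>s' = n + k * g 0\<close>
        by (cases k) (auto simp: algebra_simps)
      then show ?thesis using chain[OF ch(1), of "k - 1"] s'(3) by simp
    qed
    ultimately have av: "adj g t (n + g 0) = v" by simp
    define L where "L = ord g t n"
    define L' where "L' = ord g t (n + g 0)"
    have d1: "n = u + L * g 0" using adj_decomp[OF nS] nu by (simp add: L_def)
    have d2: "n + g 0 = v + L' * g 0" using adj_decomp[OF ch(1)] av by (simp add: L'_def)
    have LL: "L + 1 \<le> L'" using ch(2) by (simp add: L_def L'_def)
    have uv: "u - v = (L' - (L + 1)) * g 0" using d1 d2 LL by (simp add: algebra_simps diff_mult_distrib)
    have rd: "(real u - real v) / real (g 0) = real (L' - (L + 1))"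
      using uv vu gpos by (simp add: field_simps of_nat_diff[symmetric])
    have mo: "minord g t v \<le> L'"
    proof -
      obtain c where c: "c \<in> sfact g t (n + g 0)" "tlen t c = L'" using ord_ex[OF ch(1)] by (auto simp: L'_def)
      have "n + g 0 = L' * g 0 + W g t c" using maxfact[OF c(1)] c(2) by (simp add: L'_def)
      then have "W g t c = v" using d2 by simp
      then have "c(0:=0) \<in> Pset g t v" using c(1) by (simp add: Pset_def sfact_def sum_b)
      from minord_le[OF this] c(2) show ?thesis by (simp add: tlen_split)
    qed
    have "card (Rset S g t i u) \<le> dmax g t n"
    proof (rule K3[OF nS])
      show "Rset S g t i u \<subseteq> Pset g t (adj g t n)" using nu Rset_sub by simp
      fix x assume x: "x \<in> Rset S g t i u"
      then have "real (tlen t x) < real (minord g t v) - (real u - real v) / real (g 0)"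
        using False by (simp add: Rset_def A_def v_def Let_def)
      then have "real (tlen t x) < real L' - real (L' - (L + 1))" using rd mo by simp
      then have "tlen t x < L + 1" using LL by (simp add: of_nat_diff)
      then show "tlen t x \<le> ord g t n" by (simp add: L_def)
    qed
    then show ?thesis using nS by auto
  qed
qed


lemma main:
  "dmaxS S g t = Max {card (Rset S g t i u) | i u. i < g 0 \<and> u \<in> adj g t ` Sres S g i}"
proof -
  define T where "T = {card (Rset S g t i u) | i u. i < g 0 \<and> u \<in> adj g t ` Sres S g i}"
  have "T \<subseteq> (\<lambda>(i,u). card (Rset S g t i u)) ` (SIGMA i:{..<g 0}. adj g t ` Sres S g i)"
  proof
    fix a assume "a \<in> T"
    then obtain i u where a: "a = card (Rset S g t i u)" "i < g 0" "u \<in> adj g t ` Sres S g i"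
      unfolding T_def by blast
    then have "(i, u) \<in> (SIGMA i:{..<g 0}. adj g t ` Sres S g i)" by blast
    then show "a \<in> (\<lambda>(i,u). card (Rset S g t i u)) ` (SIGMA i:{..<g 0}. adj g t ` Sres S g i)"
      using a(1) by force
  qed
  moreover have "finite (SIGMA i:{..<g 0}. adj g t ` Sres S g i)"
    by (rule finite_SigmaI) (auto intro: A_fin)
  ultimately have Tf: "finite T" using finite_subset by blast
  have S0: "0 \<in> S" using Sdef by (auto intro: exI[of _ "\<lambda>_. 0"])
  have "0 \<in> Sres S g 0" using S0 by (simp add: Sres_def)
  then have Tne: "T \<noteq> {}" using gpos unfolding T_def by blast
  have b: "dmax g t s \<le> Max T" if s: "s \<in> S" for s
  proof -
    have "card (Rset S g t (s mod g 0) (adj g t s)) \<in> T"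
      unfolding T_def
      by (rule CollectI, rule exI[of _ "s mod g 0"], rule exI[of _ "adj g t s"]) (intro conjI refl mod_less_divisor[OF gpos] imageI, simp add: Sres_def s)
    then have "card (Rset S g t (s mod g 0) (adj g t s)) \<le> Max T" using Max_ge[OF Tf] by blast
    with K1[OF s] show ?thesis by simp
  qed
  have Df: "finite (dmax g t ` S)"
  proof (rule finite_subset[of _ "{..Max T}"])
    show "dmax g t ` S \<subseteq> {..Max T}" using b by blast
  qed simp
  have Dne: "dmax g t ` S \<noteq> {}" using S0 by blast
  have "Max (dmax g t ` S) \<le> Max T" using b Max_le_iff[OF Df Dne] by blast
  moreover have "Max T \<le> Max (dmax g t ` S)"
  proof (subst Max_le_iff[OF Tf Tne], intro ballI)
    fix a assume "a \<in> T"
    then obtain i u where a: "a = card (Rset S g t i u)" "u \<in> adj g t ` Sres S g i"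
      unfolding T_def by blast
    obtain n where n: "n \<in> S" "card (Rset S g t i u) \<le> dmax g t n" using K2[OF a(2)] by blast
    have "dmax g t n \<le> Max (dmax g t ` S)" using Max_ge[OF Df] n(1) by blast
    then show "a \<le> Max (dmax g t ` S)" using n a by simp
  qed
  ultimately show ?thesis unfolding dmaxS_def T_def by simp
qed
end


theorem corollary3p11:
  fixes S :: "nat set" and g :: "nat \<Rightarrow> nat" and t :: nat
  assumes "numerical_semigroup S"
    and "minimal_generators S g t"
  shows "dmaxS S g t =
    Max {card (Rset S g t i u) | i u. i < g 0 \<and> u \<in> adj g t ` Sres S g i}"
proof -
  have mg: "strict_mono_on {..t} g" "S = {n. \<exists>c. n = (\<Sum>i\<le>t. c i * g i)}"
    "\<forall>j\<le>t. g j \<notin> {n. \<exists>c. n = (\<Sum>i\<in>{..t} - {j}. c i * g i)}"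
    using assms(2) unfolding minimal_generators_def by auto
  have "g 0 \<noteq> 0"
  proof
    assume "g 0 = 0"
    then have "g 0 \<in> {n. \<exists>c. n = (\<Sum>i\<in>{..t} - {0}. c i * g i)}"
      by (auto intro: exI[of _ "\<lambda>_. 0"])
    with mg(3) show False by auto
  qed
  then have gpos: "0 < g 0" by simp
  have gm: "\<And>i. 1 \<le> i \<Longrightarrow> i \<le> t \<Longrightarrow> g 0 < g i"
    using mg(1) by (auto intro: strict_mono_onD)
  show ?thesis by (rule main[OF gpos gm mg(2)])
qed

end
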